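(* Let $(\mathcal V,\mathcal W,\lambda)$ be a FTvN system with center $C$. Then (a) every subset of $C$ is a spectral set, and (b) the orthogonal complement $C^\perp$ of $C$ in $\mathcal V$ is a spectral set.
   Context: A Fan-Theobald-von Neumann (FTvN) system is a triple $(\mathcal V,\mathcal W,\lambda)$ where $\mathcal V,\mathcal W$ are real inner product spaces and $\lambda:\mathcal V\to\mathcal W$ is a map such that: (A1) $\|\lambda(x)\|=\|x\|$ for all $x$; (A2) $\langle x,y\rangle\le\langle\lambda(x),\lambda(y)\rangle$ for all $x,y$; (A3) for every $c\in\mathcal V$ and $q\in\lambda(\mathcal V)$ there exists $x$ with $\lambda(x)=q$ and $\langle c,x\rangle=\langle\lambda(c),\lambda(x)\rangle$. The $\lambda$-orbit of $u$ is $[u]=\{x:\lambda(x)=\lambda(u)\}$; a set $E$ is spectral if $x\in E\Rightarrow[x]\subseteq E$. Elements $x,y$ commute if $\langle x,y\rangle=\langle\lambda(x),\lambda(y)\rangle$; the center $C$ is the set of elements commuting with every element of $\mathcal V$. *)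

theory Defs
  imports "HOL-Analysis.Analysis"
begin

definition FTvN_system :: "('v::real_inner \<Rightarrow> 'w::real_inner) \<Rightarrow> bool" where
  "FTvN_system lam \<longleftrightarrow>
     (\<forall>x. norm (lam x) = norm x) \<and>
     (\<forall>x y. inner x y \<le> inner (lam x) (lam y)) \<and>
     (\<forall>c. \<forall>q \<in> range lam. \<exists>x. lam x = q \<and> inner c x = inner (lam c) (lam x))"

definition lam_orbit :: "('v \<Rightarrow> 'w) \<Rightarrow> 'v \<Rightarrow> 'v set" where
  "lam_orbit lam u = {x. lam x = lam u}"

definition spectral_set :: "('v \<Rightarrow> 'w) \<Rightarrow> 'v set \<Rightarrow> bool" where
  "spectral_set lam E \<longleftrightarrow> (\<forall>x \<in> E. lam_orbit lam x \<subseteq> E)"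

definition commute :: "('v::real_inner \<Rightarrow> 'w::real_inner) \<Rightarrow> 'v \<Rightarrow> 'v \<Rightarrow> bool" where
  "commute lam x y \<longleftrightarrow> inner x y = inner (lam x) (lam y)"

definition center :: "('v::real_inner \<Rightarrow> 'w::real_inner) \<Rightarrow> 'v set" where
  "center lam = {c. \<forall>x. commute lam c x}"

end

theory Submission
  imports Defs
begin

theorem proposition6p5:
  fixes lam :: "'v::real_inner \<Rightarrow> 'w::real_inner"
  assumes "FTvN_system lam"
  shows "(\<forall>E. E \<subseteq> center lam \<longrightarrow> spectral_set lam E)
         \<and> spectral_set lam (orthogonal_comp (center lam))"
proof
  have N: "\<And>x. norm (lam x) = norm x" using assms unfolding FTvN_system_def by blast
  have orb: "x = c" if c: "c \<in> center lam" and lx: "lam x = lam c" for x c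
  proof -
    have "inner c x = inner (lam c) (lam x)" using c unfolding center_def commute_def by blast
    also have "\<dots> = inner (lam c) (lam c)" using lx by simp
    also have "\<dots> = (norm (lam c))^2" by (rule dot_square_norm)
    also have "\<dots> = (norm c)^2" using N[of c] by simp
    also have "\<dots> = inner c c" by (rule dot_square_norm[symmetric])
    finally have cx: "inner c x = inner c c" .
    have nx: "inner x x = inner c c"
    proof -
      have "norm x = norm c" using N[of x] N[of c] lx by simp
      thus ?thesis by (metis dot_square_norm)
    qed
    have "inner (x - c) (x - c) = 0"
      using cx nx by (simp add: inner_diff_left inner_diff_right inner_commute)
    thus ?thesis by simp
  qed
  show "\<forall>E. E \<subseteq> center lam \<longrightarrow> spectral_set lam E"
    unfolding spectral_set_def lam_orbit_def using orb by blast
  show "spectral_set lam (orthogonal_comp (center lam))"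
    unfolding spectral_set_def lam_orbit_def orthogonal_comp_def orthogonal_def
  proof (intro ballI subsetI CollectI)
    fix x y c
    assume x: "x \<in> {y. \<forall>c\<in>center lam. inner c y = 0}" and y: "y \<in> {z. lam z = lam x}"
       and c: "c \<in> center lam"
    have "inner c y = inner (lam c) (lam y)" using c unfolding center_def commute_def by blast
    also have "\<dots> = inner (lam c) (lam x)" using y by simp
    also have "\<dots> = inner c x"
    proof -
      have "inner c x = inner (lam c) (lam x)" using c unfolding center_def commute_def by blast
      thus ?thesis by simp
    qed
    also have "\<dots> = 0" using x c by simp
    finally show "inner c y = 0" .
  qed
qed

end
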